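(* (a) For every integer $k \geq 10$, if $|q - q_k| \leq q_k^{-2k-6}$ then $q \in \mathcal{B}_3$. (b) If $0 < q - q_9 \leq q_9^{-24}$ then $q \in \mathcal{B}_3$.
   Context: For $q \in (1,2)$ let $I_q = [0, \frac{1}{q-1}]$. A sequence $(\epsilon_j)_{j\ge1} \in \{0,1\}^\mathbb{N}$ is a base $q$ expansion of $x$ if $x = \sum_{j\ge1} \epsilon_j q^{-j}$; let $\Sigma_q(x)$ be the set of base $q$ expansions of $x$. Let $\mathcal{U}_q^{(3)} = \{x \in I_q : |\Sigma_q(x)| = 3\}$ and $\mathcal{B}_3 = \{q \in (1,2) : \mathcal{U}_q^{(3)} \neq \emptyset\}$. For $k \geq 2$, the $k$-Bonacci number $q_k$ is the unique root in $(1,2)$ of $x^k - x^{k-1} - \cdots - x - 1 = 0$. *)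

theory Defs
  imports "HOL-Analysis.Analysis"
begin

text \<open>A digit sequence (in {0,1}) is encoded as a function nat => bool; the digit
  epsilon_j (j >= 1) of the paper is stored at position j - 1.\<close>

definition digit :: "bool \<Rightarrow> real" where
  "digit b = (if b then 1 else 0)"

definition expansions :: "real \<Rightarrow> real \<Rightarrow> (nat \<Rightarrow> bool) set" where
  "expansions q x = {e. (\<lambda>j. digit (e j) / q ^ (Suc j)) sums x}"

definition I_q :: "real \<Rightarrow> real set" where
  "I_q q = {0 .. 1 / (q - 1)}"

definition U3 :: "real \<Rightarrow> real set" where
  "U3 q = {x \<in> I_q q. finite (expansions q x) \<and> card (expansions q x) = 3}"

definition B3 :: "real set" where
  "B3 = {q. 1 < q \<and> q < 2 \<and> U3 q \<noteq> {}}"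

definition kbonacci :: "nat \<Rightarrow> real" where
  "kbonacci k = (THE x. 1 < x \<and> x < 2 \<and> x ^ k = (\<Sum>i<k. x ^ i))"

end

theory Submission
  imports Defs
begin

definition val :: "real \<Rightarrow> (nat \<Rightarrow> bool) \<Rightarrow> real" where
  "val q e = (\<Sum>j. digit (e j) / q ^ Suc j)"

definition sh :: "nat \<Rightarrow> (nat \<Rightarrow> bool) \<Rightarrow> nat \<Rightarrow> bool" where
  "sh n e = (\<lambda>j. e (j + n))"

definition run :: "bool \<Rightarrow> nat \<Rightarrow> (nat \<Rightarrow> bool) \<Rightarrow> nat \<Rightarrow> bool" where
  "run b m t = (\<lambda>j. if j < m then b else t (j - m))"

lemma digit_ge0: "0 \<le> digit b" and digit_le1: "digit b \<le> 1"
  by (auto simp: digit_def)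

lemma geom_sums: "1 < (q::real) \<Longrightarrow> (\<lambda>j. 1 / q ^ Suc j) sums (1 / (q - 1))"
proof -
  assume q: "1 < q"
  have "(\<lambda>j. (1/q) ^ j) sums (1 / (1 - 1/q))"
    using geometric_sums[of "1/q"] q by simp
  then have "(\<lambda>j. (1/q) * (1/q) ^ j) sums ((1/q) * (1 / (1 - 1/q)))"
    by (rule sums_mult)
  moreover have "(1/q) * (1 / (1 - 1/q)) = 1 / (q - 1)" using q by (simp add: field_simps)
  ultimately show ?thesis by (simp add: power_divide)
qed

lemma summable_val: "1 < q \<Longrightarrow> summable (\<lambda>j. digit (e j) / q ^ Suc j)"
proof (rule summable_comparison_test')
  assume q: "1 < q"
  show "summable (\<lambda>j. 1 / q ^ Suc j)" using geom_sums[OF q] by (rule sums_summable)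
  fix n :: nat
  show "norm (digit (e n) / q ^ Suc n) \<le> 1 / q ^ Suc n"
    using q by (auto simp: digit_def)
qed

lemma exp_iff: "1 < q \<Longrightarrow> e \<in> expansions q x \<longleftrightarrow> val q e = x"
  unfolding expansions_def val_def using summable_val[of q e]
  by (auto simp: sums_iff)

lemma val_nonneg: "1 < q \<Longrightarrow> 0 \<le> val q e"
  unfolding val_def by (rule suminf_nonneg[OF summable_val]) (auto simp: digit_def)

lemma val_le: "1 < q \<Longrightarrow> val q e \<le> 1 / (q - 1)"
proof -
  assume q: "1 < q"
  have "val q e \<le> (\<Sum>j. 1 / q ^ Suc j)"
    unfolding val_def
    by (rule suminf_le) (use q summable_val[OF q] sums_summable[OF geom_sums[OF q]] in \<open>auto simp: digit_def\<close>)
  then show ?thesis using sums_unique[OF geom_sums[OF q]] by simp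
qed

lemma val_split: "1 < q \<Longrightarrow> val q e = (\<Sum>j<n. digit (e j) / q ^ Suc j) + val q (sh n e) / q ^ n"
proof -
  assume q: "1 < q"
  have "val q e = (\<Sum>j. digit (e (j + n)) / q ^ Suc (j + n)) + (\<Sum>j<n. digit (e j) / q ^ Suc j)"
    unfolding val_def by (rule suminf_split_initial_segment[OF summable_val[OF q]])
  moreover have "(\<Sum>j. digit (e (j + n)) / q ^ Suc (j + n)) = (\<Sum>j. digit (sh n e j) / q ^ Suc j / q ^ n)"
    by (simp add: sh_def power_add field_simps)
  moreover have "(\<Sum>j. digit (sh n e j) / q ^ Suc j / q ^ n) = val q (sh n e) / q ^ n"
    unfolding val_def by (rule suminf_divide[OF summable_val[OF q]])
  ultimately show ?thesis by simp
qed

lemma sh_sh: "sh m (sh n e) = sh (m + n) e"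
  by (simp add: sh_def ac_simps)

lemma sh_0[simp]: "sh 0 e = e" by (simp add: sh_def)

lemma val_Suc: "1 < q \<Longrightarrow> val q e = (digit (e 0) + val q (sh 1 e)) / q"
  using val_split[of q e 1] by (simp add: field_simps)

lemma val_ge_term: "1 < q \<Longrightarrow> t j \<Longrightarrow> 1 / q ^ Suc j \<le> val q t"
proof -
  assume q: "1 < q" and tj: "t j"
  have "1 / q ^ Suc j \<le> (\<Sum>i<Suc j. digit (t i) / q ^ Suc i)"
    using member_le_sum[of j "{..<Suc j}" "\<lambda>i. digit (t i) / q ^ Suc i"] tj q
    by (auto simp: digit_def)
  also have "\<dots> \<le> val q t"
    unfolding val_def by (rule sum_le_suminf[OF summable_val[OF q]]) (use q in \<open>auto simp: digit_def\<close>)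
  finally show ?thesis .
qed

lemma val_compl: "1 < q \<Longrightarrow> val q t + val q (\<lambda>i. \<not> t i) = 1 / (q - 1)"
proof -
  assume q: "1 < q"
  have "(\<lambda>j. digit (t j) / q ^ Suc j + digit (\<not> t j) / q ^ Suc j) sums (val q t + val q (\<lambda>i. \<not> t i))"
    unfolding val_def by (rule sums_add) (use summable_val[OF q] in \<open>auto simp: summable_sums\<close>)
  moreover have "(\<lambda>j. digit (t j) / q ^ Suc j + digit (\<not> t j) / q ^ Suc j) = (\<lambda>j. 1 / q ^ Suc j)"
    by (auto simp: digit_def add_divide_distrib[symmetric])
  ultimately show ?thesis using geom_sums[OF q] sums_unique2 by metis
qed

lemma val_le_miss: "1 < q \<Longrightarrow> \<not> t j \<Longrightarrow> val q t \<le> 1 / (q - 1) - 1 / q ^ Suc j"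
  using val_compl[of q t] val_ge_term[of q "\<lambda>i. \<not> t i" j] by simp

definition good_at :: "real \<Rightarrow> (nat \<Rightarrow> bool) \<Rightarrow> nat \<Rightarrow> bool" where
  "good_at q t n \<longleftrightarrow> (\<not> t n \<longrightarrow> val q (sh (Suc n) t) < 1) \<and> (t n \<longrightarrow> val q (sh (Suc n) t) > (2 - q) / (q - 1))"

lemma sh1: "sh 1 (sh n e) = sh (Suc n) e" by (simp add: sh_def)
lemma sh_app0: "sh n e 0 = e n" by (simp add: sh_def)

lemma prefix_sum_eq: "\<forall>i<n. e i = t i \<Longrightarrow> (\<Sum>j<n. digit (e j) / q ^ Suc j) = (\<Sum>j<n. digit (t j) / q ^ Suc j)"
  by (rule sum.cong) auto

lemma forced:
  assumes q: "1 < q" and v: "val q e = val q t" and agree: "\<forall>i<n. e i = t i" and g: "good_at q t n"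
  shows "e n = t n"
proof -
  have s1: "val q e = (\<Sum>j<n. digit (e j) / q ^ Suc j) + val q (sh n e) / q ^ n"
    by (rule val_split[OF q])
  have s2: "val q t = (\<Sum>j<n. digit (t j) / q ^ Suc j) + val q (sh n t) / q ^ n"
    by (rule val_split[OF q])
  have "val q (sh n e) / q ^ n = val q (sh n t) / q ^ n"
    using s1 s2 prefix_sum_eq[OF agree, of q] v by linarith
  moreover have "q ^ n \<noteq> 0" using q by simp
  ultimately have eq: "val q (sh n e) = val q (sh n t)" using q by auto
  have he: "val q (sh n e) = (digit (e n) + val q (sh (Suc n) e)) / q"
    using val_Suc[OF q, of "sh n e"] by (simp only: sh1 sh_app0)
  have ht: "val q (sh n t) = (digit (t n) + val q (sh (Suc n) t)) / q"
    using val_Suc[OF q, of "sh n t"] by (simp only: sh1 sh_app0)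
  have E: "digit (e n) + val q (sh (Suc n) e) = digit (t n) + val q (sh (Suc n) t)"
    using eq he ht q by simp
  have n1: "0 \<le> val q (sh (Suc n) e)" by (rule val_nonneg[OF q])
  have n2: "val q (sh (Suc n) e) \<le> 1 / (q - 1)" by (rule val_le[OF q])
  have eta: "1 + (2 - q) / (q - 1) = 1 / (q - 1)" using q by (simp add: field_simps)
  show ?thesis
  proof (cases "t n")
    case True
    then have "val q (sh (Suc n) t) > (2 - q) / (q - 1)" using g by (simp add: good_at_def)
    moreover have "\<not> e n \<Longrightarrow> False"
    proof -
      assume "\<not> e n"
      then have "val q (sh (Suc n) e) = 1 + val q (sh (Suc n) t)" using E True by (simp add: digit_def)
      then show False using n2 eta \<open>val q (sh (Suc n) t) > (2 - q) / (q - 1)\<close> by linarith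
    qed
    then show ?thesis using True by auto
  next
    case False
    then have "val q (sh (Suc n) t) < 1" using g by (simp add: good_at_def)
    moreover have "e n \<Longrightarrow> False"
    proof -
      assume "e n"
      then have "1 + val q (sh (Suc n) e) = val q (sh (Suc n) t)" using E False by (simp add: digit_def)
      then show False using n1 \<open>val q (sh (Suc n) t) < 1\<close> by linarith
    qed
    then show ?thesis using False by auto
  qed
qed

lemma unique_from:
  assumes q: "1 < q" and v: "val q e = val q t" and agree: "\<forall>i<m. e i = t i"
    and g: "\<forall>n\<ge>m. good_at q t n"
  shows "e = t"
proof -
  have "\<forall>i<m + j. e i = t i" for j
  proof (induction j)
    case 0 then show ?case using agree by simp
  next
    case (Suc j)
    have "e (m + j) = t (m + j)" by (rule forced[OF q v Suc.IH]) (use g in auto)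
    then show ?case using Suc.IH by (auto simp: less_Suc_eq)
  qed
  then show ?thesis
  proof -
    assume h: "\<And>j. \<forall>i<m + j. e i = t i"
    show ?thesis
    proof
      fix i
      show "e i = t i" using h[of "Suc i"] by simp
    qed
  qed
qed

lemma run_lt[simp]: "j < m \<Longrightarrow> run b m t j = b" by (simp add: run_def)
lemma run_0[simp]: "run b 0 t = t" by (simp add: run_def)
lemma sh_run_ge: "m \<le> n \<Longrightarrow> sh n (run b m t) = sh (n - m) t"
  by (auto simp: sh_def run_def)
lemma sh_run_le: "n \<le> m \<Longrightarrow> sh n (run b m t) = run b (m - n) t"
  by (auto simp: sh_def run_def fun_eq_iff)

lemma geom_fin: "1 < (q::real) \<Longrightarrow> (\<Sum>j<m. 1 / q ^ Suc j) = (1 - 1 / q ^ m) / (q - 1)"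
proof (induction m)
  case 0 then show ?case by auto
next
  case (Suc m)
  have aux: "(1 - 1 / Q) / (q - 1) + 1 / (q * Q) = (1 - 1 / (q * Q)) / (q - 1)" if "Q > 0" for Q :: real
    using Suc.prems that by (simp add: field_simps)
  have "(\<Sum>j<Suc m. 1 / q ^ Suc j) = (1 - 1 / q ^ m) / (q - 1) + 1 / (q * q ^ m)"
    using Suc by simp
  also have "\<dots> = (1 - 1 / q ^ Suc m) / (q - 1)" using aux[of "q ^ m"] Suc.prems by simp
  finally show ?case .
qed

lemma val_run: "1 < q \<Longrightarrow> val q (run b m t) = digit b * (1 - 1 / q ^ m) / (q - 1) + val q t / q ^ m"
proof -
  assume q: "1 < q"
  have "val q (run b m t) = (\<Sum>j<m. digit (run b m t j) / q ^ Suc j) + val q (sh m (run b m t)) / q ^ m"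
    by (rule val_split[OF q])
  moreover have "(\<Sum>j<m. digit (run b m t j) / q ^ Suc j) = digit b * (\<Sum>j<m. 1 / q ^ Suc j)"
    by (simp add: sum_distrib_left)
  moreover have "sh m (run b m t) = t" by (simp add: sh_run_ge)
  ultimately show ?thesis using geom_fin[OF q, of m] by simp
qed

lemma good_run_T':
  assumes q: "1 < q" "q < 2" and q19: "19/10 \<le> q" and n: "Suc n < m"
  shows "good_at q (run True m t) n"
proof -
  have "sh (Suc n) (run True m t) 0" using n by (simp add: sh_def run_def)
  then have "1 / q ^ Suc 0 \<le> val q (sh (Suc n) (run True m t))" by (rule val_ge_term[OF q(1)])
  moreover have "(2 - q) / (q - 1) < 1 / q"
  proof -
    have h: "0 \<le> (q - 19/10) * (q + 9/10)" using q19 by simp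
    then have "q * (2 - q) < q - 1" by (simp add: algebra_simps)
    then show ?thesis using q by (simp add: field_simps)
  qed
  ultimately show ?thesis using n by (simp add: good_at_def)
qed

lemma good_run_T_last:
  assumes q: "1 < q" "q < 2" and q19: "19/10 \<le> q" and n: "n < m" and v: "val q t > (2 - q) / (q - 1)"
  shows "good_at q (run True m t) n"
proof (cases "Suc n < m")
  case True then show ?thesis using good_run_T'[OF q q19] by blast
next
  case False
  then have "Suc n = m" using n by simp
  then have "sh (Suc n) (run True m t) = t" by (simp add: sh_run_ge)
  then show ?thesis using v n by (simp add: good_at_def)
qed

lemma good_run_F':
  assumes q: "1 < q" "q < 2" and q19: "19/10 \<le> q" and n: "Suc n < m"
  shows "good_at q (run False m t) n"
proof -
  have "sh (Suc n) (run False m t) = run False (m - Suc n) t" using n by (simp add: sh_run_le)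
  moreover have "val q (run False (m - Suc n) t) = val q t / q ^ (m - Suc n)"
    using val_run[OF q(1)] by (simp add: digit_def)
  moreover have "val q t / q ^ (m - Suc n) \<le> val q t / q"
  proof -
    have "q ^ 1 \<le> q ^ (m - Suc n)" by (rule power_increasing) (use n q in auto)
    then show ?thesis using val_nonneg[OF q(1), of t] q
      by (intro divide_left_mono) auto
  qed
  moreover have "val q t / q < 1"
  proof -
    have "val q t \<le> 1 / (q - 1)" by (rule val_le[OF q(1)])
    moreover have "1 / (q - 1) < q"
    proof -
      have h: "0 \<le> (q - 19/10) * (q + 9/10)" using q19 by simp
      then have "1 < q * (q - 1)" by (simp add: algebra_simps)
      then show ?thesis using q by (simp add: field_simps)
    qed
    ultimately have "val q t < q" by linarith
    then show ?thesis using q by (simp add: field_simps)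
  qed
  ultimately show ?thesis using n by (simp add: good_at_def)
qed

lemma good_run_F_last:
  assumes q: "1 < q" "q < 2" and q19: "19/10 \<le> q" and n: "n < m" and v: "val q t < 1"
  shows "good_at q (run False m t) n"
proof (cases "Suc n < m")
  case True then show ?thesis using good_run_F'[OF q q19] by blast
next
  case False
  then have "Suc n = m" using n by simp
  then have "sh (Suc n) (run False m t) = t" by (simp add: sh_run_ge)
  then show ?thesis using v n by (simp add: good_at_def)
qed

lemma good_run_ge:
  assumes "m \<le> n" and "good_at q t (n - m)"
  shows "good_at q (run b m t) n"
proof -
  have "sh (Suc n) (run b m t) = sh (Suc (n - m)) t" using assms(1) by (simp add: sh_run_ge Suc_diff_le)
  moreover have "run b m t n = t (n - m)" using assms(1) by (simp add: run_def)
  ultimately show ?thesis using assms(2) by (simp add: good_at_def)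
qed

definition nice :: "(nat \<Rightarrow> bool) \<Rightarrow> bool" where
  "nice t \<longleftrightarrow> (\<forall>n. (\<exists>j<7. t (n + j)) \<and> (\<exists>j<7. \<not> t (n + j)))"

lemma nice_sh: "nice t \<Longrightarrow> nice (sh m t)"
  unfolding nice_def sh_def
proof (intro allI conjI)
  fix n assume h: "\<forall>n. (\<exists>j<7. t (n + j)) \<and> (\<exists>j<7. \<not> t (n + j))"
  from h[rule_format, of "n + m"] show "\<exists>j<7. t (n + j + m)" "\<exists>j<7. \<not> t (n + j + m)"
    by (auto simp: ac_simps)
qed

lemma pow_le7: "1 < (q::real) \<Longrightarrow> j < 7 \<Longrightarrow> 1 / q ^ 7 \<le> 1 / q ^ Suc j"
  by (intro divide_left_mono power_increasing) auto

lemma nice_lower: "1 < q \<Longrightarrow> nice t \<Longrightarrow> 1 / q ^ 7 \<le> val q t"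
proof -
  assume q: "1 < q" and n: "nice t"
  then obtain j where j: "j < 7" "t j" unfolding nice_def by (metis add_0)
  show ?thesis using pow_le7[OF q j(1)] val_ge_term[of q t j, OF q j(2)] by linarith
qed

lemma nice_upper: "1 < q \<Longrightarrow> nice t \<Longrightarrow> val q t \<le> 1 / (q - 1) - 1 / q ^ 7"
proof -
  assume q: "1 < q" and n: "nice t"
  then obtain j where j: "j < 7" "\<not> t j" unfolding nice_def by (metis add_0)
  show ?thesis using pow_le7[OF q j(1)] val_le_miss[of q t j, OF q j(2)] by linarith
qed

lemma numerics:
  fixes q :: real
  assumes q: "1997/1000 \<le> q" "q < 2"
  shows "1 / (q - 1) - 1 / q ^ 7 < 1" and "(2 - q) / (q - 1) < 1 / q ^ 8"
proof -
  have q1: "1 < q" using q by simp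
  have "q ^ 7 \<le> 2 ^ 7" by (rule power_mono) (use q in auto)
  then have a: "1 / 128 \<le> 1 / q ^ 7" using q1 by (simp add: field_simps)
  have "q ^ 8 \<le> 2 ^ 8" by (rule power_mono) (use q in auto)
  then have b: "1 / 256 \<le> 1 / q ^ 8" using q1 by (simp add: field_simps)
  have c: "(2 - q) / (q - 1) \<le> 3 / 997"
    using q by (simp add: field_simps)
  have d: "1 / (q - 1) - 1 = (2 - q) / (q - 1)" using q1 by (simp add: field_simps)
  show "1 / (q - 1) - 1 / q ^ 7 < 1" using a c d by linarith
  show "(2 - q) / (q - 1) < 1 / q ^ 8" using b c by linarith
qed

lemma nice_good:
  assumes q: "1997/1000 \<le> q" "q < 2" and n: "nice t"
  shows "good_at q t m"
proof -
  have q1: "1 < q" using q by simp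
  have ns: "nice (sh (Suc m) t)" by (rule nice_sh[OF n])
  have "1 / q ^ 8 \<le> 1 / q ^ 7" using q1 by (intro divide_left_mono power_increasing) auto
  then show ?thesis unfolding good_at_def
    using nice_lower[OF q1 ns] nice_upper[OF q1 ns] numerics[OF q] by auto
qed

lemma nice_lt1: "1997/1000 \<le> q \<Longrightarrow> q < 2 \<Longrightarrow> nice t \<Longrightarrow> val q t < 1"
  using nice_upper[of q t] numerics[of q] by force

lemma good_Fm:
  assumes q: "1997/1000 \<le> q" "q < 2" and n: "nice t"
  shows "good_at q (run False m t) i"
proof (cases "i < m")
  case True
  show ?thesis by (rule good_run_F_last) (use q nice_lt1[OF q n] True in auto)
next
  case False
  then show ?thesis by (intro good_run_ge) (use nice_good[OF q n] in auto)
qed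

lemma good_TF1:
  assumes q: "1997/1000 \<le> q" "q < 2" and n: "nice t"
  shows "good_at q (run True m (run False 1 t)) i"
proof (cases "i < m")
  case True
  have q1: "1 < q" using q by simp
  have "val q (run False 1 t) = val q t / q" using val_run[OF q1, of False 1 t] by (simp add: digit_def)
  moreover have "1 / q ^ 8 \<le> val q t / q"
  proof -
    have "1 / q ^ 7 / q \<le> val q t / q"
      by (rule divide_right_mono[OF nice_lower[OF q1 n]]) (use q1 in simp)
    moreover have "1 / q ^ 8 = 1 / q ^ 7 / q" using power_add[of q 7 1] by simp
    ultimately show ?thesis by simp
  qed
  ultimately have "val q (run False 1 t) > (2 - q) / (q - 1)" using numerics(2)[OF q] by linarith
  then show ?thesis using good_run_T_last[of q i m "run False 1 t"] q True by auto
next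
  case False
  show ?thesis by (rule good_run_ge) (use good_Fm[OF q n] False in auto)
qed

lemma A1:
  fixes a q d vB vC F :: real
  assumes an: "a \<noteq> 0" and q0: "q \<noteq> 0" and d0: "d \<noteq> 0" and dq: "d = q - 1"
  shows "((1 - 1 / (a * a)) / d + (vB + a * a * q * (1 - (1 - 1 / a) / d)) / (q * (a * a))) / q
       = (1 - 1 / q) / d + (((1 - 1 / a) / d + vB / (q * a)) / a) / q"
  using an q0 d0 by (simp add: field_simps) (simp add: dq algebra_simps)
lemma A2:
  fixes a q d vB vC F :: real
  assumes an: "a \<noteq> 0" and q0: "q \<noteq> 0" and d0: "d \<noteq> 0" and dq: "d = q - 1"
  shows "(1 - 1 / q) / d + (((1 - 1 / a) / d + (vC + a * q * (1 - (1 - 1 / a) / d)) / (q * a)) / a) / q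
    = (1 - 1 / q) / d + (((1 - 1 / q) / d + vC / (a * q) / q) / (a / q)) / q"
  using an q0 d0 by (simp add: field_simps) (simp add: dq algebra_simps)

lemma core:
  fixes q :: real and k :: nat and A B C :: "nat \<Rightarrow> bool"
  assumes q: "1997/1000 \<le> q" "q < 2" and k: "2 \<le> k"
    and nA: "nice A" and nB: "nice B" and nC: "nice C"
    and rel1: "val q A - val q B = q ^ (2 * k + 1) * (1 - (1 - 1 / q ^ k) / (q - 1))"
    and rel2: "val q B - val q C = q ^ (k + 1) * (1 - (1 - 1 / q ^ k) / (q - 1))"
  shows "q \<in> B3"
proof -
  have q1: "1 < q" using q by simp
  define s1 where "s1 = run False 1 (run True (2 * k) (run False 1 A))"
  define s2 where "s2 = run True 1 (run False k (run True k (run False 1 B)))"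
  define s3 where "s3 = run True 1 (run False (k - 1) (run True 1 (run False (k + 1) C)))"
  define a where "a = q ^ k"
  have a0: "0 < a" unfolding a_def using q1 by simp
  have p1: "q ^ (2 * k) = a * a" unfolding a_def by (simp add: power_mult[symmetric] mult.commute power2_eq_square[symmetric] power_even_eq)
  have p2: "q ^ (2 * k + 1) = a * a * q" using p1 by simp
  have p3: "q ^ (k + 1) = a * q" unfolding a_def by simp
  have p4: "q ^ (k - 1) * q = a" unfolding a_def using k by (simp add: power_Suc2[symmetric] del: power_Suc2)
  have p5: "q ^ (k - 1) = a / q" using p4 q1 by (simp add: field_simps)
  define vA where "vA = val q A"
  define vB where "vB = val q B"
  define vC where "vC = val q C"
  define F where "F = (1 - 1 / a) / (q - 1)"
  have "vA - vB = q ^ (2 * k + 1) * (1 - F)" using rel1 unfolding vA_def vB_def F_def a_def .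
  then have r1: "vA = vB + a * a * q * (1 - F)" unfolding p2 by simp
  have "vB - vC = q ^ (k + 1) * (1 - F)" using rel2 unfolding vB_def vC_def F_def a_def .
  then have r2: "vB = vC + a * q * (1 - F)" unfolding p3 by simp
  note vr = val_run[OF q1]
  have v1: "val q s1 = ((1 - 1 / (a * a)) / (q - 1) + vA / (q * (a * a))) / q"
    unfolding s1_def vA_def by (simp add: vr digit_def p1)
  have v2: "val q s2 = (1 - 1 / q) / (q - 1) + (((1 - 1 / a) / (q - 1) + vB / (q * a)) / a) / q"
    unfolding s2_def vB_def by (simp add: vr digit_def a_def[symmetric])
  have v3: "val q s3 = (1 - 1 / q) / (q - 1) + (((1 - 1 / q) / (q - 1) + vC / (a * q) / q) / (a / q)) / q"
  proof -
    have p4': "q ^ (k - Suc 0) * q = a" using p4 by simp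
    show ?thesis
      unfolding s3_def vC_def using q1 by (simp add: vr digit_def a_def[symmetric] p4')
  qed
  have e12: "val q s1 = val q s2"
    unfolding v1 v2 r1 F_def by (rule A1) (use a0 q1 in auto)
  have e23: "val q s2 = val q s3"
    unfolding v2 v3 r2 F_def by (rule A2) (use a0 q1 in auto)
  define x where "x = val q s1"
  have g1': "good_at q s1 n" if "1 \<le> n" for n
    unfolding s1_def
    apply (rule good_run_ge)
     apply (use that in simp)
    by (rule good_TF1[OF q nA])
  have g1: "\<forall>n\<ge>1. good_at q s1 n" using g1' by auto
  have g2a: "good_at q s2 n" if "1 \<le> n" "n < k" for n
    unfolding s2_def
    apply (rule good_run_ge)
     apply (use that in simp)
    apply (rule good_run_F')
    using q that by auto
  have g2b': "good_at q s2 n" if "k + 1 \<le> n" for n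
    unfolding s2_def
    apply (rule good_run_ge)
     apply (use that in simp)
    apply (rule good_run_ge)
     apply (use that in simp)
    by (rule good_TF1[OF q nB])
  have g2b: "\<forall>n\<ge>k + 1. good_at q s2 n" using g2b' by auto
  have g3': "good_at q s3 n" if "k + 1 \<le> n" for n
    unfolding s3_def
    apply (rule good_run_ge)
     apply (use that in simp)
    apply (rule good_run_ge)
     apply (use that in simp)
    apply (rule good_run_ge)
     apply (use that k in simp)
    by (rule good_Fm[OF q nC])
  have g3: "\<forall>n\<ge>k + 1. good_at q s3 n" using g3' by auto
  have s1_0: "\<not> s1 0" unfolding s1_def by simp
  have s2_0: "s2 0" unfolding s2_def by simp
  have s3_0: "s3 0" unfolding s3_def by simp
  have s2_mid: "\<not> s2 i" if "1 \<le> i" "i \<le> k" for i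
    unfolding s2_def using that by (simp add: run_def)
  have s3_mid: "\<not> s3 i" if "1 \<le> i" "i < k" for i
    unfolding s3_def using that by (simp add: run_def)
  have s3_k: "s3 k" unfolding s3_def using k by (simp add: run_def)
  have agree23: "\<forall>i<k. s3 i = s2 i"
    using s2_0 s3_0 s2_mid s3_mid by (metis less_imp_le_nat less_one not_less)
  have EX: "expansions q x = {s1, s2, s3}"
  proof
    show "{s1, s2, s3} \<subseteq> expansions q x"
      using exp_iff[OF q1] e12 e23 unfolding x_def by auto
  next
    show "expansions q x \<subseteq> {s1, s2, s3}"
    proof
      fix e assume "e \<in> expansions q x"
      then have ve: "val q e = x" using exp_iff[OF q1] by simp
      show "e \<in> {s1, s2, s3}"
      proof (cases "e 0")
        case False
        have "e = s1"
          by (rule unique_from[OF q1, of e s1 1]) (use ve x_def False s1_0 g1 in auto)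
        then show ?thesis by simp
      next
        case True
        have ve2: "val q e = val q s2" using ve x_def e12 by simp
        have ag: "\<forall>i<j. e i = s2 i" if "j \<le> k" for j
          using that
        proof (induction j)
          case 0 then show ?case by simp
        next
          case (Suc j)
          then have IH: "\<forall>i<j. e i = s2 i" by simp
          have "e j = s2 j"
          proof (cases "j = 0")
            case True then show ?thesis using \<open>e 0\<close> s2_0 by simp
          next
            case False
            then show ?thesis by (rule_tac forced[OF q1 ve2 IH g2a]) (use Suc.prems False in auto)
          qed
          then show ?case using IH less_Suc_eq by auto
        qed
        have agk: "\<forall>i<k. e i = s2 i" using ag[of k] by simp
        show ?thesis
        proof (cases "e k")
          case False
          have "e = s2"
            by (rule unique_from[OF q1 ve2, of "k + 1"])
               (use agk False s2_mid[of k] k g2b in \<open>auto simp: less_Suc_eq\<close>)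
          then show ?thesis by simp
        next
          case True
          have ve3: "val q e = val q s3" using ve2 e23 by simp
          have "e = s3"
            by (rule unique_from[OF q1 ve3, of "k + 1"])
               (use agk agree23 True s3_k g3 in \<open>auto simp: less_Suc_eq\<close>)
          then show ?thesis by simp
        qed
      qed
    qed
  qed
  have d12: "s1 \<noteq> s2" using s1_0 s2_0 by auto
  have d13: "s1 \<noteq> s3" using s1_0 s3_0 by auto
  have d23: "s2 \<noteq> s3" using s2_mid[of k] s3_k k by auto
  have card: "card (expansions q x) = 3" using EX d12 d13 d23 by simp
  have xI: "x \<in> I_q q" unfolding I_q_def x_def using val_nonneg[OF q1] val_le[OF q1] by simp
  have "x \<in> U3 q" unfolding U3_def using xI card EX by simp
  then show ?thesis unfolding B3_def using q by auto
qed

definition bit4 :: "int \<Rightarrow> nat \<Rightarrow> bool" where "bit4 x i = odd (x div 2 ^ (3 - i))"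

definition bv :: "real \<Rightarrow> int \<Rightarrow> real" where
  "bv q x = digit (bit4 x 0) * q ^ 3 + digit (bit4 x 1) * q ^ 2 + digit (bit4 x 2) * q + digit (bit4 x 3)"

lemma int_cases15: "0 \<le> (x::int) \<Longrightarrow> x \<le> 15 \<Longrightarrow>
  x = 0 \<or> x = 1 \<or> x = 2 \<or> x = 3 \<or> x = 4 \<or> x = 5 \<or> x = 6 \<or> x = 7 \<or> x = 8 \<or> x = 9 \<or>
  x = 10 \<or> x = 11 \<or> x = 12 \<or> x = 13 \<or> x = 14 \<or> x = 15"
  by presburger

lemma bv_int: "0 \<le> x \<Longrightarrow> x \<le> 15 \<Longrightarrow>
  real_of_int x = digit (bit4 x 0) * 8 + digit (bit4 x 1) * 4 + digit (bit4 x 2) * 2 + digit (bit4 x 3)"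
  by (drule (1) int_cases15) (elim disjE; simp add: bit4_def digit_def)

lemma ex4: "(\<exists>i<(4::nat). P i) \<longleftrightarrow> P 0 \<or> P 1 \<or> P 2 \<or> P 3"
proof
  assume "\<exists>i<4. P i"
  then obtain i where i: "i < 4" "P i" by blast
  then have "i = 0 \<or> i = 1 \<or> i = 2 \<or> i = 3" by auto
  then show "P 0 \<or> P 1 \<or> P 2 \<or> P 3" using i by auto
next
  assume "P 0 \<or> P 1 \<or> P 2 \<or> P 3"
  then show "\<exists>i<4. P i"
  proof (elim disjE)
    assume "P 0" then show ?thesis by (intro exI[of _ 0]) simp
  next
    assume "P 1" then show ?thesis by (intro exI[of _ 1]) simp
  next
    assume "P 2" then show ?thesis by (intro exI[of _ 2]) simp
  next
    assume "P 3" then show ?thesis by (intro exI[of _ 3]) simp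
  qed
qed

lemma nonconst: "1 \<le> x \<Longrightarrow> x \<le> 14 \<Longrightarrow> (\<exists>i<4. bit4 x i) \<and> (\<exists>i<4. \<not> bit4 x i)"
  unfolding ex4 using int_cases15[of x]
  by (auto simp: bit4_def)

lemma D_bounds:
  assumes q: "1997/1000 \<le> q" "q \<le> 2" and x: "0 \<le> x" "x \<le> 15"
  shows "0 \<le> real_of_int x - bv q x" "real_of_int x - bv q x \<le> 8/100"
proof -
  have a3: "q ^ 3 \<le> 2 ^ 3" by (rule power_mono) (use q in auto)
  have a2: "q ^ 2 \<le> 2 ^ 2" by (rule power_mono) (use q in auto)
  have b3: "(1997/1000) ^ 3 \<le> q ^ 3" by (rule power_mono) (use q in auto)
  have b2: "(1997/1000) ^ 2 \<le> q ^ 2" by (rule power_mono) (use q in auto)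
  have c3: "(7964/1000::real) \<le> (1997/1000)^3" by (simp add: power3_eq_cube)
  have c2: "(3988/1000::real) \<le> (1997/1000)^2" by (simp add: power2_eq_square)
  have t0: "0 \<le> 8 - q ^ 3" "0 \<le> 4 - q ^ 2" "0 \<le> 2 - q" using a3 a2 q by auto
  have dd: "0 \<le> digit b" "digit b \<le> 1" for b by (auto simp: digit_def)
  have e: "real_of_int x - bv q x = digit (bit4 x 0) * (8 - q ^ 3) + digit (bit4 x 1) * (4 - q ^ 2)
      + digit (bit4 x 2) * (2 - q)"
    using bv_int[OF x] unfolding bv_def by (simp add: algebra_simps)
  have m1: "digit (bit4 x 0) * (8 - q ^ 3) \<le> 8 - q ^ 3" by (rule mult_left_le_one_le) (use t0 dd in auto)
  have m2: "digit (bit4 x 1) * (4 - q ^ 2) \<le> 4 - q ^ 2" by (rule mult_left_le_one_le) (use t0 dd in auto)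
  have m3: "digit (bit4 x 2) * (2 - q) \<le> 2 - q" by (rule mult_left_le_one_le) (use t0 dd in auto)
  have z1: "0 \<le> digit (bit4 x 0) * (8 - q ^ 3)" using t0 dd by simp
  have z2: "0 \<le> digit (bit4 x 1) * (4 - q ^ 2)" using t0 dd by simp
  have z3: "0 \<le> digit (bit4 x 2) * (2 - q)" using t0 dd by simp
  show "0 \<le> real_of_int x - bv q x" unfolding e using z1 z2 z3 by linarith
  show "real_of_int x - bv q x \<le> 8/100" unfolding e using m1 m2 m3 b3 b2 c3 c2 q by linarith
qed

definition hexr :: "real \<Rightarrow> real \<Rightarrow> int \<times> int" where
  "hexr s1 s2 = (let a = \<lfloor>s1\<rfloor>; b = \<lfloor>s2\<rfloor>; f1 = s1 - of_int a; f2 = s2 - of_int b in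
     if f1 + f2 \<le> 2/3 then (a, b) else if 4/3 \<le> f1 + f2 then (a + 1, b + 1)
     else if f2 \<le> f1 then (a + 1, b) else (a, b + 1))"

lemma absD: "\<bar>a\<bar> \<le> (b::real) \<Longrightarrow> a \<le> b \<and> - a \<le> b" by auto

lemma int_bound: "\<bar>real_of_int u\<bar> < 13 \<Longrightarrow> \<bar>u\<bar> < 13"
  by (metis of_int_abs of_int_less_numeral_iff)

lemma hexr_bound:
  assumes h: "hexr s1 s2 = (u, v)"
  shows "\<bar>s1 - of_int u\<bar> \<le> 2/3 \<and> \<bar>s2 - of_int v\<bar> \<le> 2/3 \<and> \<bar>s1 + s2 - of_int u - of_int v\<bar> \<le> 2/3"
proof -
  define a where "a = \<lfloor>s1\<rfloor>"
  define b where "b = \<lfloor>s2\<rfloor>"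
  have f1: "of_int a \<le> s1" "s1 < of_int a + 1" unfolding a_def by linarith+
  have f2: "of_int b \<le> s2" "s2 < of_int b + 1" unfolding b_def by linarith+
  have h': "(if (s1 - of_int a) + (s2 - of_int b) \<le> 2/3 then (a, b)
     else if 4/3 \<le> (s1 - of_int a) + (s2 - of_int b) then (a + 1, b + 1)
     else if s2 - of_int b \<le> s1 - of_int a then (a + 1, b) else (a, b + 1)) = (u, v)"
    using h unfolding hexr_def Let_def a_def b_def .
  show ?thesis
  proof (cases "(s1 - of_int a) + (s2 - of_int b) \<le> 2/3")
    case True
    then have "u = a" "v = b" using h' by auto
    then show ?thesis using True f1 f2 unfolding abs_le_iff by (intro conjI; linarith)
  next
    case c1: False
    show ?thesis
    proof (cases "4/3 \<le> (s1 - of_int a) + (s2 - of_int b)")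
      case True
      then have "u = a + 1" "v = b + 1" using h' c1 by auto
      then show ?thesis using True f1 f2 unfolding abs_le_iff by (intro conjI; linarith)
    next
      case c2: False
      show ?thesis
      proof (cases "s2 - of_int b \<le> s1 - of_int a")
        case True
        then have "u = a + 1" "v = b" using h' c1 c2 by auto
        then show ?thesis using True c1 c2 f1 f2 unfolding abs_le_iff by (intro conjI; linarith)
      next
        case False
        then have "u = a" "v = b + 1" using h' c1 c2 by auto
        then show ?thesis using False c1 c2 f1 f2 unfolding abs_le_iff by (intro conjI; linarith)
      qed
    qed
  qed
qed

definition uu :: "real \<Rightarrow> real \<times> real \<Rightarrow> int" where "uu q r = fst (hexr (q ^ 4 * fst r) (q ^ 4 * snd r))"
definition vv :: "real \<Rightarrow> real \<times> real \<Rightarrow> int" where "vv q r = snd (hexr (q ^ 4 * fst r) (q ^ 4 * snd r))"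
definition yb :: "real \<Rightarrow> real \<times> real \<Rightarrow> int" where "yb q r = max 1 (max (1 - uu q r) (1 + vv q r))"
definition xb :: "real \<Rightarrow> real \<times> real \<Rightarrow> int" where "xb q r = yb q r + uu q r"
definition zb :: "real \<Rightarrow> real \<times> real \<Rightarrow> int" where "zb q r = yb q r - vv q r"
definition nxt :: "real \<Rightarrow> real \<times> real \<Rightarrow> real \<times> real" where
  "nxt q r = (q ^ 4 * fst r - (bv q (xb q r) - bv q (yb q r)), q ^ 4 * snd r - (bv q (yb q r) - bv q (zb q r)))"
definition hexok :: "real \<times> real \<Rightarrow> bool" where
  "hexok r \<longleftrightarrow> \<bar>fst r\<bar> \<le> 3/4 \<and> \<bar>snd r\<bar> \<le> 3/4 \<and> \<bar>fst r + snd r\<bar> \<le> 3/4"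

lemma step_ok:
  assumes q: "1997/1000 \<le> q" "q < 2" and h: "hexok r"
  shows "1 \<le> xb q r \<and> xb q r \<le> 14 \<and> 1 \<le> yb q r \<and> yb q r \<le> 14 \<and> 1 \<le> zb q r \<and> zb q r \<le> 14 \<and> hexok (nxt q r)"
proof -
  define r1 where "r1 = fst r"
  define r2 where "r2 = snd r"
  define u where "u = uu q r"
  define v where "v = vv q r"
  define s1 where "s1 = q ^ 4 * r1"
  define s2 where "s2 = q ^ 4 * r2"
  have hx: "hexr s1 s2 = (u, v)" unfolding u_def v_def uu_def vv_def s1_def s2_def r1_def r2_def by simp
  have hb: "\<bar>s1 - of_int u\<bar> \<le> 2/3" "\<bar>s2 - of_int v\<bar> \<le> 2/3" "\<bar>s1 + s2 - of_int u - of_int v\<bar> \<le> 2/3"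
    using hexr_bound[OF hx] by auto
  have q4: "q ^ 4 \<le> 16" using power_mono[of q 2 4] q by simp
  have q40: "0 \<le> q ^ 4" using q by simp
  have hr: "\<bar>r1\<bar> \<le> 3/4" "\<bar>r2\<bar> \<le> 3/4" "\<bar>r1 + r2\<bar> \<le> 3/4" using h unfolding hexok_def r1_def r2_def by auto
  have m1: "\<bar>s1\<bar> \<le> 12"
  proof -
    have "\<bar>s1\<bar> = q ^ 4 * \<bar>r1\<bar>" unfolding s1_def using q40 by (simp add: abs_mult)
    also have "\<dots> \<le> 16 * (3/4)" by (rule mult_mono) (use q4 hr q40 in auto)
    finally show ?thesis by simp
  qed
  have m2: "\<bar>s2\<bar> \<le> 12"
  proof -
    have "\<bar>s2\<bar> = q ^ 4 * \<bar>r2\<bar>" unfolding s2_def using q40 by (simp add: abs_mult)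
    also have "\<dots> \<le> 16 * (3/4)" by (rule mult_mono) (use q4 hr q40 in auto)
    finally show ?thesis by simp
  qed
  have m3: "\<bar>s1 + s2\<bar> \<le> 12"
  proof -
    have "\<bar>s1 + s2\<bar> = q ^ 4 * \<bar>r1 + r2\<bar>" unfolding s1_def s2_def using q40 by (simp add: abs_mult distrib_left[symmetric])
    also have "\<dots> \<le> 16 * (3/4)" by (rule mult_mono) (use q4 hr q40 in auto)
    finally show ?thesis by simp
  qed
  note H = absD[OF hb(1)] absD[OF hb(2)] absD[OF hb(3)] absD[OF m1] absD[OF m2] absD[OF m3]
  have "\<bar>real_of_int u\<bar> < 13" unfolding abs_less_iff using H by (intro conjI; linarith)
  then have iu1: "\<bar>u\<bar> < 13" by (rule int_bound)
  have "\<bar>real_of_int v\<bar> < 13" unfolding abs_less_iff using H by (intro conjI; linarith)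
  then have iu2: "\<bar>v\<bar> < 13" by (rule int_bound)
  have "\<bar>real_of_int (u + v)\<bar> < 13" unfolding abs_less_iff of_int_add using H by (intro conjI; linarith)
  then have iu3: "\<bar>u + v\<bar> < 13" by (rule int_bound)
  have iu: "u < 13" "u > -13" "v < 13" "v > -13" "u + v < 13" "u + v > -13"
    using iu1 iu2 iu3 by auto
  have rng: "1 \<le> xb q r \<and> xb q r \<le> 14 \<and> 1 \<le> yb q r \<and> yb q r \<le> 14 \<and> 1 \<le> zb q r \<and> zb q r \<le> 14"
    using iu unfolding xb_def yb_def zb_def u_def[symmetric] v_def[symmetric] by auto
  define x where "x = xb q r"
  define y where "y = yb q r"
  define z where "z = zb q r"
  have xyz: "x = y + u" "z = y - v" unfolding x_def y_def z_def xb_def zb_def u_def v_def by auto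
  have q2: "q \<le> 2" using q by simp
  have Dx: "0 \<le> real_of_int x - bv q x" "real_of_int x - bv q x \<le> 8/100"
    using D_bounds[OF q(1) q2, of x] rng unfolding x_def by auto
  have Dy: "0 \<le> real_of_int y - bv q y" "real_of_int y - bv q y \<le> 8/100"
    using D_bounds[OF q(1) q2, of y] rng unfolding y_def by auto
  have Dz: "0 \<le> real_of_int z - bv q z" "real_of_int z - bv q z \<le> 8/100"
    using D_bounds[OF q(1) q2, of z] rng unfolding z_def by auto
  have n1: "fst (nxt q r) = s1 - (bv q x - bv q y)" unfolding nxt_def s1_def r1_def x_def y_def by simp
  have n2: "snd (nxt q r) = s2 - (bv q y - bv q z)" unfolding nxt_def s2_def r2_def z_def y_def by simp
  have cx: "real_of_int x = real_of_int y + real_of_int u" "real_of_int z = real_of_int y - real_of_int v"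
    using xyz by auto
  have "hexok (nxt q r)" unfolding hexok_def n1 n2 abs_le_iff
    using H Dx Dy Dz cx by (intro conjI; linarith)
  then show ?thesis using rng by simp
qed

definition st :: "real \<Rightarrow> real \<times> real \<Rightarrow> nat \<Rightarrow> real \<times> real" where
  "st q r0 n = (nxt q ^^ n) r0"

lemma st_0[simp]: "st q r0 0 = r0" by (simp add: st_def)
lemma st_Suc[simp]: "st q r0 (Suc n) = nxt q (st q r0 n)" by (simp add: st_def)

lemma st_ok: "1997/1000 \<le> q \<Longrightarrow> q < 2 \<Longrightarrow> hexok r0 \<Longrightarrow> hexok (st q r0 n)"
  by (induction n) (use step_ok in auto)

definition bseq :: "(nat \<Rightarrow> int) \<Rightarrow> nat \<Rightarrow> bool" where
  "bseq X j = bit4 (X (j div 4)) (j mod 4)"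

lemma div4: "i < 4 \<Longrightarrow> (n * 4 + i) div 4 = (n::nat)" and mod4: "i < 4 \<Longrightarrow> (n * 4 + i) mod 4 = (i::nat)"
  by auto

lemma bseq_nice:
  assumes X: "\<And>n. 1 \<le> X n \<and> X n \<le> 14"
  shows "nice (bseq X)"
  unfolding nice_def
proof (intro allI conjI)
  fix m :: nat
  define n where "n = (m + 3) div 4"
  have n1: "m \<le> n * 4" "n * 4 + 3 \<le> m + 6" unfolding n_def by auto
  obtain i where i: "i < 4" "bit4 (X n) i" using nonconst X by blast
  obtain i' where i': "i' < 4" "\<not> bit4 (X n) i'" using nonconst X by blast
  have "bseq X (m + (n * 4 + i - m))" using i n1 by (simp add: bseq_def div4 mod4)
  moreover have "n * 4 + i - m < 7" using i n1 by simp
  ultimately show "\<exists>j<7. bseq X (m + j)" by blast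
  have "\<not> bseq X (m + (n * 4 + i' - m))" using i' n1 by (simp add: bseq_def div4 mod4)
  moreover have "n * 4 + i' - m < 7" using i' n1 by simp
  ultimately show "\<exists>j<7. \<not> bseq X (m + j)" by blast
qed

lemma sum4: "sum f {(m::nat)..<m + 4} = f m + f (m + 1) + f (m + 2) + f (m + 3)"
proof -
  have "{m..<m+4} = {m, m+1, m+2, m+3}" by auto
  then show ?thesis by (simp add: ac_simps)
qed
lemma X:
  fixes Q q d0 d1 d2 d3 :: real
  assumes Q0: "Q \<noteq> 0" and q0: "q \<noteq> 0"
  shows "d0 / (Q * q) + d1 / (Q * q ^ 2) + d2 / (Q * q ^ 3) + d3 / (Q * q ^ 4)
     = (d0 * q ^ 3 + d1 * q ^ 2 + d2 * q + d3) / (Q * q ^ 4)"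
proof -
  have "(d0 * q ^ 3 + d1 * q ^ 2 + d2 * q + d3) / (Q * q ^ 4)
      = d0 * q ^ 3 / (Q * q ^ 4) + d1 * q ^ 2 / (Q * q ^ 4) + d2 * q / (Q * q ^ 4) + d3 / (Q * q ^ 4)"
    by (simp add: add_divide_distrib)
  also have "d0 * q ^ 3 / (Q * q ^ 4) = d0 / (Q * q)" using Q0 q0 by (simp add: eval_nat_numeral field_simps)
  also have "d1 * q ^ 2 / (Q * q ^ 4) = d1 / (Q * q ^ 2)" using Q0 q0 by (simp add: eval_nat_numeral field_simps)
  also have "d2 * q / (Q * q ^ 4) = d2 / (Q * q ^ 3)" using Q0 q0 by (simp add: eval_nat_numeral field_simps)
  finally show ?thesis by simp
qed

lemma bseq_sums:
  assumes q: "1 < q"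
  shows "(\<lambda>n. bv q (X n) / q ^ (4 * n + 4)) sums val q (bseq X)"
proof -
  have s: "(\<lambda>j. digit (bseq X j) / q ^ Suc j) sums val q (bseq X)"
    unfolding val_def using summable_val[OF q] by (simp add: summable_sums)
  have g: "(\<lambda>n. sum (\<lambda>j. digit (bseq X j) / q ^ Suc j) {n * 4..<n * 4 + 4}) sums val q (bseq X)"
    by (rule sums_group[OF s]) simp
  have eq: "sum (\<lambda>j. digit (bseq X j) / q ^ Suc j) {n * 4..<n * 4 + 4} = bv q (X n) / q ^ (4 * n + 4)" for n
  proof -
    define f where "f = (\<lambda>j. digit (bseq X j) / q ^ Suc j)"
    define Q where "Q = q ^ (n * 4)"
    have Q0: "Q \<noteq> 0" unfolding Q_def using q by simp
    have q0: "q \<noteq> 0" using q by simp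
    have fi: "f (n * 4 + i) = digit (bit4 (X n) i) / (Q * q ^ Suc i)" if "i < 4" for i
      unfolding f_def Q_def using that by (simp add: bseq_def div4 mod4 power_add)
    have pw4: "q ^ (4 * n + 4) = Q * q ^ 4" unfolding Q_def by (simp add: power_add mult.commute)
    have "sum f {n * 4..<n * 4 + 4} = f (n * 4) + f (n * 4 + 1) + f (n * 4 + 2) + f (n * 4 + 3)"
      by (rule sum4)
    also have "\<dots> = digit (bit4 (X n) 0) / (Q * q) + digit (bit4 (X n) 1) / (Q * q ^ 2)
        + digit (bit4 (X n) 2) / (Q * q ^ 3) + digit (bit4 (X n) 3) / (Q * q ^ 4)"
      using fi[of 0] fi[of 1] fi[of 2] fi[of 3] by (simp add: power2_eq_square)
    also have "\<dots> = bv q (X n) / (Q * q ^ 4)"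
      unfolding bv_def by (rule X[OF Q0 q0])
    finally show ?thesis unfolding f_def pw4 .
  qed
  show ?thesis using g unfolding eq .
qed

lemma partial1:
  assumes q: "1 < q"
  shows "(\<Sum>n<N. (bv q (xb q (st q r0 n)) - bv q (yb q (st q r0 n))) / q ^ (4 * n + 4))
      = fst r0 - fst (st q r0 N) / q ^ (4 * N)"
proof (induction N)
  case 0 then show ?case by simp
next
  case (Suc N)
  define Q where "Q = q ^ (4 * N)"
  have Q0: "Q \<noteq> 0" unfolding Q_def using q by simp
  have p1: "q ^ (4 * N + 4) = Q * q ^ 4" unfolding Q_def by (simp add: power_add)
  have p2: "q ^ (4 * Suc N) = Q * q ^ 4" unfolding Q_def by (simp add: power_add)
  show ?case
    unfolding sum.lessThan_Suc Suc.IH st_Suc nxt_def fst_conv p1 p2 Q_def[symmetric]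
    using Q0 q by (simp add: field_simps)
qed

lemma partial2:
  assumes q: "1 < q"
  shows "(\<Sum>n<N. (bv q (yb q (st q r0 n)) - bv q (zb q (st q r0 n))) / q ^ (4 * n + 4))
      = snd r0 - snd (st q r0 N) / q ^ (4 * N)"
proof (induction N)
  case 0 then show ?case by simp
next
  case (Suc N)
  define Q where "Q = q ^ (4 * N)"
  have Q0: "Q \<noteq> 0" unfolding Q_def using q by simp
  have p1: "q ^ (4 * N + 4) = Q * q ^ 4" unfolding Q_def by (simp add: power_add)
  have p2: "q ^ (4 * Suc N) = Q * q ^ 4" unfolding Q_def by (simp add: power_add)
  show ?case
    unfolding sum.lessThan_Suc Suc.IH st_Suc nxt_def snd_conv p1 p2 Q_def[symmetric]
    using Q0 q by (simp add: field_simps)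
qed

lemma rem_zero:
  assumes q: "1 < q" and b: "\<And>N. \<bar>f N\<bar> \<le> 3/4"
  shows "(\<lambda>N. f N / q ^ (4 * N)) \<longlonglongrightarrow> (0::real)"
proof (rule Lim_null_comparison)
  show "\<forall>\<^sub>F N in sequentially. norm (f N / q ^ (4 * N)) \<le> 3/4 * (1 / q ^ 4) ^ N"
  proof (rule always_eventually, rule allI)
    fix N
    have "norm (f N / q ^ (4 * N)) = \<bar>f N\<bar> / q ^ (4 * N)" using q by (simp add: abs_divide)
    also have "\<dots> \<le> 3/4 / q ^ (4 * N)" by (rule divide_right_mono) (use b q in auto)
    also have "\<dots> = 3/4 * (1 / q ^ 4) ^ N" by (simp add: power_mult power_divide)
    finally show "norm (f N / q ^ (4 * N)) \<le> 3/4 * (1 / q ^ 4) ^ N" .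
  qed
  have "\<bar>1 / q ^ 4\<bar> < 1" using q by simp
  then have "(\<lambda>N. (1 / q ^ 4) ^ N) \<longlonglongrightarrow> 0" by (rule LIMSEQ_abs_realpow_zero2)
  then show "(\<lambda>N. 3/4 * (1 / q ^ 4) ^ N) \<longlonglongrightarrow> 0" by (simp add: tendsto_mult_right_zero)
qed

lemma construct:
  assumes q: "1997/1000 \<le> q" "q < 2" and T: "\<bar>T1\<bar> \<le> 3/8" "\<bar>T2\<bar> \<le> 3/8"
  shows "\<exists>A B C. nice A \<and> nice B \<and> nice C \<and> val q A - val q B = T1 \<and> val q B - val q C = T2"
proof -
  have q1: "1 < q" using q by simp
  define r0 where "r0 = (T1, T2)"
  have h0: "hexok r0" unfolding hexok_def r0_def using T abs_triangle_ineq[of T1 T2] by auto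
  have hk: "hexok (st q r0 n)" for n by (rule st_ok[OF q h0])
  have ok: "1 \<le> xb q (st q r0 n) \<and> xb q (st q r0 n) \<le> 14 \<and> 1 \<le> yb q (st q r0 n) \<and> yb q (st q r0 n) \<le> 14
      \<and> 1 \<le> zb q (st q r0 n) \<and> zb q (st q r0 n) \<le> 14" for n
    using step_ok[OF q hk[of n]] by simp
  define A where "A = bseq (\<lambda>n. xb q (st q r0 n))"
  define B where "B = bseq (\<lambda>n. yb q (st q r0 n))"
  define C where "C = bseq (\<lambda>n. zb q (st q r0 n))"
  have nA: "nice A" unfolding A_def by (rule bseq_nice) (use ok in auto)
  have nB: "nice B" unfolding B_def by (rule bseq_nice) (use ok in auto)
  have nC: "nice C" unfolding C_def by (rule bseq_nice) (use ok in auto)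
  have sA: "(\<lambda>n. bv q (xb q (st q r0 n)) / q ^ (4 * n + 4)) sums val q A"
    unfolding A_def by (rule bseq_sums[OF q1])
  have sB: "(\<lambda>n. bv q (yb q (st q r0 n)) / q ^ (4 * n + 4)) sums val q B"
    unfolding B_def by (rule bseq_sums[OF q1])
  have sC: "(\<lambda>n. bv q (zb q (st q r0 n)) / q ^ (4 * n + 4)) sums val q C"
    unfolding C_def by (rule bseq_sums[OF q1])
  have dAB: "(\<lambda>n. (bv q (xb q (st q r0 n)) - bv q (yb q (st q r0 n))) / q ^ (4 * n + 4)) sums (val q A - val q B)"
    using sums_diff[OF sA sB] by (simp add: diff_divide_distrib)
  have dBC: "(\<lambda>n. (bv q (yb q (st q r0 n)) - bv q (zb q (st q r0 n))) / q ^ (4 * n + 4)) sums (val q B - val q C)"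
    using sums_diff[OF sB sC] by (simp add: diff_divide_distrib)
  have b1: "\<bar>fst (st q r0 N)\<bar> \<le> 3/4" for N using hk[of N] unfolding hexok_def by auto
  have b2: "\<bar>snd (st q r0 N)\<bar> \<le> 3/4" for N using hk[of N] unfolding hexok_def by auto
  have l1: "(\<lambda>N. fst r0 - fst (st q r0 N) / q ^ (4 * N)) \<longlonglongrightarrow> fst r0 - 0"
    by (intro tendsto_intros rem_zero[OF q1 b1])
  have l2: "(\<lambda>N. snd r0 - snd (st q r0 N) / q ^ (4 * N)) \<longlonglongrightarrow> snd r0 - 0"
    by (intro tendsto_intros rem_zero[OF q1 b2])
  have e1: "(\<lambda>n. (bv q (xb q (st q r0 n)) - bv q (yb q (st q r0 n))) / q ^ (4 * n + 4)) sums T1"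
    unfolding sums_def partial1[OF q1] using l1 by (simp add: r0_def)
  have e2: "(\<lambda>n. (bv q (yb q (st q r0 n)) - bv q (zb q (st q r0 n))) / q ^ (4 * n + 4)) sums T2"
    unfolding sums_def partial2[OF q1] using l2 by (simp add: r0_def)
  have "val q A - val q B = T1" using sums_unique2[OF dAB e1] .
  moreover have "val q B - val q C = T2" using sums_unique2[OF dBC e2] .
  ultimately show ?thesis using nA nB nC by blast
qed

lemma n9: "(500::real) < (1998/1000)^9" by (simp add: power_divide)
lemma n7: "(100::real) \<le> (1998/1000)^7" by (simp add: power_divide)
lemma pow_small:
  fixes t :: real
  assumes t: "0 \<le> t" and nt: "real n * t \<le> 1/2"
  shows "(1 + t) ^ n \<le> 2"
proof (cases "n = 0")
  case True then show ?thesis by simp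
next
  case False
  then have n1: "1 \<le> real n" by simp
  have "t \<le> real n * t" using mult_right_mono[OF n1 t] by simp
  then have t1: "t \<le> 1/2" using nt by linarith
  have b: "1 + real n * (- t) \<le> (1 + (- t)) ^ n" by (rule Bernoulli_inequality) (use t1 in simp)
  then have b2: "1/2 \<le> (1 - t) ^ n" using nt by simp
  have tt: "t * t \<le> 1" using mult_left_mono[of t 1 t] t t1 by simp
  have "(1 + t) ^ n * (1 - t) ^ n = (1 - t^2) ^ n" by (simp add: power_mult_distrib[symmetric] algebra_simps power2_eq_square)
  also have "\<dots> \<le> 1" by (rule power_le_one) (use t1 t tt in \<open>auto simp: power2_eq_square\<close>)
  finally have c: "(1 + t) ^ n * (1 - t) ^ n \<le> 1" .
  have "(1 + t) ^ n * (1/2) \<le> (1 + t) ^ n * (1 - t) ^ n"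
    by (rule mult_left_mono[OF b2]) (use t in simp)
  then show ?thesis using c by simp
qed

lemma n10: "(1000::real) \<le> (1998/1000)^10" by (simp add: power_divide)
lemma n5: "(31::real) \<le> (1998/1000)^5" by (simp add: power_divide)

definition H :: "nat \<Rightarrow> real \<Rightarrow> real" where "H k x = (1 - 1 / x ^ k) / (x - 1)"

lemma H_sum: "1 < x \<Longrightarrow> H k x = (\<Sum>j<k. 1 / x ^ Suc j)"
  using geom_fin[of x k] by (simp add: H_def)

lemma H_decr:
  assumes x: "1 < x" "x < y" and k: "0 < k"
  shows "H k y < H k x"
proof -
  have "(\<Sum>j<k. 1 / y ^ Suc j) < (\<Sum>j<k. 1 / x ^ Suc j)"
  proof (rule sum_strict_mono)
    show "finite {..<k}" by simp
    show "{..<k} \<noteq> {}" using k by auto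
    fix j assume "j \<in> {..<k}"
    have "x ^ Suc j < y ^ Suc j" by (rule power_strict_mono) (use x in auto)
    moreover have "0 < x ^ Suc j" using x by simp
    ultimately show "1 / y ^ Suc j < 1 / x ^ Suc j" by (simp add: frac_less2)
  qed
  then show ?thesis using H_sum[of x k] H_sum[of y k] x by simp
qed

lemma aux_eq: "(a::real) \<noteq> 0 \<Longrightarrow> (1 - 1 / a = b) \<longleftrightarrow> (a - 1 = b * a)"
  by (auto simp: field_simps)

lemma H_char:
  assumes x: "1 < x"
  shows "(x ^ k = (\<Sum>i<k. x ^ i)) \<longleftrightarrow> H k x = 1"
proof -
  have xm: "x - 1 \<noteq> 0" using x by simp
  have xk: "x ^ k \<noteq> 0" using x by simp
  have gs: "(\<Sum>i<k. x ^ i) = (x ^ k - 1) / (x - 1)" by (rule geometric_sum) (use x in simp)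
  have e1: "(x ^ k = (\<Sum>i<k. x ^ i)) \<longleftrightarrow> x ^ k * (x - 1) = x ^ k - 1"
    unfolding gs using xm by (simp add: eq_divide_eq)
  have e2: "H k x = 1 \<longleftrightarrow> 1 - 1 / x ^ k = x - 1"
    using xm by (auto simp: H_def)
  have e3: "(1 - 1 / x ^ k = x - 1) \<longleftrightarrow> x ^ k - 1 = (x - 1) * x ^ k"
    by (rule aux_eq[OF xk])
  show ?thesis using e1 e2 e3 by (auto simp: mult.commute)
qed

lemma kb:
  assumes k: "2 \<le> k"
  shows "1 < kbonacci k \<and> kbonacci k < 2 \<and> H k (kbonacci k) = 1"
proof -
  define P where "P = (\<lambda>x::real. 1 < x \<and> x < 2 \<and> x ^ k = (\<Sum>i<k. x ^ i))"
  define p where "p = (\<lambda>x::real. x ^ k - (\<Sum>i<k. x ^ i))"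
  have cont: "continuous_on {1..2} p" unfolding p_def by (intro continuous_intros)
  have p1: "p 1 = 1 - real k" unfolding p_def by simp
  have g2: "(\<Sum>i<k. (2::real) ^ i) = 2 ^ k - 1" using geometric_sum[of "2::real" k] by simp
  have p2: "p 2 = 1" unfolding p_def g2 by simp
  obtain x where x: "1 \<le> x" "x \<le> 2" "p x = 0"
    using IVT'[of p 1 0 2] cont p1 p2 k by auto
  have "x \<noteq> 1" using x p1 k by auto
  moreover have "x \<noteq> 2" using x p2 by auto
  ultimately have Px: "P x" using x unfolding P_def p_def by auto
  have uq: "y = z" if "P y" "P z" for y z
  proof -
    have hy: "H k y = 1" using that(1) H_char[of y k] unfolding P_def by auto
    have hz: "H k z = 1" using that(2) H_char[of z k] unfolding P_def by auto
    have k0: "0 < k" using k by simp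
    show ?thesis
    proof (rule ccontr)
      assume "y \<noteq> z"
      then consider "y < z" | "z < y" by linarith
      then show False
      proof cases
        case 1 then show False using H_decr[of y z k] hy hz k0 that(1) unfolding P_def by auto
      next
        case 2 then show False using H_decr[of z y k] hy hz k0 that(2) unfolding P_def by auto
      qed
    qed
  qed
  have "P (THE x. P x)" by (rule theI[of P x]) (use Px uq in auto)
  then have "P (kbonacci k)" unfolding kbonacci_def P_def by simp
  then show ?thesis using H_char[of "kbonacci k" k] unfolding P_def by auto
qed

lemma kb_lower:
  assumes k: "9 \<le> k"
  shows "1998/1000 < kbonacci k"
proof (rule ccontr)
  assume "\<not> 1998/1000 < kbonacci k"
  then have c: "kbonacci k \<le> 1998/1000" by simp
  have kbk: "1 < kbonacci k" "H k (kbonacci k) = 1" using kb[of k] k by auto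
  have "(1998/1000::real) ^ 9 \<le> (1998/1000) ^ k" by (rule power_increasing) (use k in auto)
  then have big: "500 < (1998/1000::real) ^ k" using n9 by linarith
  have "H k (1998/1000) > 1"
  proof -
    have "1 / (1998/1000::real) ^ k < 1 / 500" using big by (simp add: field_simps)
    then show ?thesis unfolding H_def by (simp add: field_simps)
  qed
  moreover have "H k (1998/1000) \<le> H k (kbonacci k)"
  proof (cases "kbonacci k = 1998/1000")
    case True then show ?thesis by (subst True) simp
  next
    case False
    then have "kbonacci k < 1998/1000" using c by simp
    then show ?thesis using H_decr[of "kbonacci k" "1998/1000" k] kbk k by simp
  qed
  ultimately show False using kbk by simp
qed

lemma pow_diff_bound:
  fixes a b :: real
  assumes a: "0 \<le> a" "a \<le> 2" and b: "0 \<le> b" "b \<le> 2"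
  shows "\<bar>a ^ k - b ^ k\<bar> \<le> \<bar>a - b\<bar> * (real k * 2 ^ (k - 1))"
proof -
  have eq: "a ^ k - b ^ k = (a - b) * (\<Sum>i<k. b ^ (k - Suc i) * a ^ i)" by (rule power_diff_sumr2)
  have t: "b ^ (k - Suc i) * a ^ i \<le> 2 ^ (k - 1)" if "i < k" for i
  proof -
    have "b ^ (k - Suc i) * a ^ i \<le> 2 ^ (k - Suc i) * 2 ^ i"
      by (intro mult_mono power_mono) (use a b in auto)
    also have "\<dots> = 2 ^ (k - 1)" using that by (simp add: power_add[symmetric])
    finally show ?thesis .
  qed
  have s0: "0 \<le> (\<Sum>i<k. b ^ (k - Suc i) * a ^ i)" using a b by (intro sum_nonneg) simp
  have "(\<Sum>i<k. b ^ (k - Suc i) * a ^ i) \<le> (\<Sum>i<k. (2::real) ^ (k - 1))"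
    by (rule sum_mono) (use t in auto)
  also have "\<dots> = real k * 2 ^ (k - 1)" by simp
  finally have s1: "(\<Sum>i<k. b ^ (k - Suc i) * a ^ i) \<le> real k * 2 ^ (k - 1)" .
  have "\<bar>a ^ k - b ^ k\<bar> = \<bar>a - b\<bar> * (\<Sum>i<k. b ^ (k - Suc i) * a ^ i)"
    unfolding eq abs_mult using s0 by simp
  also have "\<dots> \<le> \<bar>a - b\<bar> * (real k * 2 ^ (k - 1))" by (rule mult_left_mono[OF s1]) simp
  finally show ?thesis .
qed

lemma inv_diff: "0 < (a::real) \<Longrightarrow> 0 < b \<Longrightarrow> 1 / a - 1 / b = (b - a) / (a * b)"
  by (simp add: field_simps)

lemma main:
  fixes q :: real and k :: nat
  assumes k: "9 \<le> k" and q: "1 < q" "q < 2"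
    and close: "\<bar>q - kbonacci k\<bar> \<le> 1 / kbonacci k ^ (2 * k + 6)"
  shows "q \<in> B3"
proof -
  define c where "c = kbonacci k"
  have c: "1998/1000 < c" "c < 2" "H k c = 1" using kb[of k] kb_lower[OF k] k unfolding c_def by auto
  have c1: "1 < c" using c by simp
  define e where "e = 1 / c ^ (2 * k + 6)"
  have cl: "\<bar>q - c\<bar> \<le> e" using close unfolding c_def e_def .
  have "(1998/1000::real) ^ 10 \<le> c ^ 10" by (rule power_mono) (use c in auto)
  moreover have "c ^ 10 \<le> c ^ (2 * k + 6)" by (rule power_increasing) (use c1 k in auto)
  ultimately have "1000 \<le> c ^ (2 * k + 6)" using n10 by linarith
  then have e1: "e \<le> 1 / 1000" unfolding e_def by (simp add: field_simps)
  have e0: "0 \<le> e" unfolding e_def using c1 by simp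
  have q2: "1997/1000 \<le> q" using cl e1 c by (auto simp: abs_le_iff)
  define N where "N = (\<lambda>x::real. x - 2 + 1 / x ^ k)"
  have Nc: "N c = 0"
  proof -
    have "1 - 1 / c ^ k = c - 1" using c(3) c1 unfolding H_def by (simp add: divide_eq_1_iff)
    then show ?thesis unfolding N_def by simp
  qed
  have HN: "1 - H k q = N q / (q - 1)"
    unfolding H_def N_def using q by (simp add: field_simps)
  have pk: "\<bar>c ^ k - q ^ k\<bar> \<le> \<bar>c - q\<bar> * (real k * 2 ^ (k - 1))"
    by (rule pow_diff_bound) (use c q in auto)
  have qc: "real k * 2 ^ (k - 1) \<le> q ^ k * c ^ k"
  proof -
    have "1 + real k * (99/100) \<le> (1 + 99/100::real) ^ k" by (rule Bernoulli_inequality) simp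
    then have b: "real k \<le> 2 * (199/100::real) ^ k" by simp
    have "1997/1000 * (1998/1000) \<le> q * c" using mult_mono[of "1997/1000" q "1998/1000" c] q2 c by simp
    then have "2 * (199/100::real) \<le> q * c" by simp
    then have "(2 * (199/100::real)) ^ k \<le> (q * c) ^ k" by (rule power_mono) simp
    moreover have "real k * 2 ^ (k - 1) \<le> (2 * (199/100::real)) ^ k"
    proof -
      have "real k * 2 ^ (k - 1) \<le> 2 * (199/100) ^ k * 2 ^ (k - 1)"
        by (rule mult_right_mono[OF b]) simp
      also have "\<dots> = (2 * 2 ^ (k - 1)) * (199/100::real) ^ k" by (simp only: mult_ac)
      also have "\<dots> = 2 ^ k * (199/100::real) ^ k"
      proof -
        have "k = Suc (k - 1)" using k by simp
        then have "(2::real) * 2 ^ (k - 1) = 2 ^ k" by (metis power_Suc)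
        then show ?thesis by (rule arg_cong[where f="\<lambda>z. z * (199/100::real) ^ k"])
      qed
      also have "\<dots> = (2 * (199/100::real)) ^ k" by (simp only: power_mult_distrib)
      finally show ?thesis .
    qed
    moreover have "(q * c) ^ k = q ^ k * c ^ k" by (rule power_mult_distrib)
    ultimately show ?thesis by linarith
  qed
  have inv: "\<bar>1 / q ^ k - 1 / c ^ k\<bar> \<le> \<bar>q - c\<bar>"
  proof -
    have qk0: "0 < q ^ k" "0 < c ^ k" using q c1 by auto
    have d: "1 / q ^ k - 1 / c ^ k = (c ^ k - q ^ k) / (q ^ k * c ^ k)"
      by (rule inv_diff) (use qk0 in auto)
    have "\<bar>1 / q ^ k - 1 / c ^ k\<bar> = \<bar>c ^ k - q ^ k\<bar> / (q ^ k * c ^ k)"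
      unfolding d abs_divide using qk0 by simp
    also have "\<dots> \<le> \<bar>c - q\<bar> * (real k * 2 ^ (k - 1)) / (q ^ k * c ^ k)"
      by (rule divide_right_mono[OF pk]) (use qk0 in simp)
    also have "\<dots> \<le> \<bar>c - q\<bar>"
    proof -
      have "\<bar>c - q\<bar> * (real k * 2 ^ (k - 1)) \<le> \<bar>c - q\<bar> * (q ^ k * c ^ k)"
        by (rule mult_left_mono[OF qc]) simp
      then show ?thesis using qk0 by (simp add: divide_le_eq)
    qed
    finally show ?thesis by (simp add: abs_minus_commute)
  qed
  have Nq: "\<bar>N q\<bar> \<le> 2 * e"
  proof -
    have "N q = N q - N c" using Nc by simp
    also have "\<dots> = (q - c) + (1 / q ^ k - 1 / c ^ k)" unfolding N_def by simp
    finally have "\<bar>N q\<bar> \<le> \<bar>q - c\<bar> + \<bar>1 / q ^ k - 1 / c ^ k\<bar>" by (metis abs_triangle_ineq)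
    then show ?thesis using inv cl by linarith
  qed
  have ratio: "q ^ (2 * k + 1) \<le> 2 * c ^ (2 * k + 1)"
  proof (cases "q \<le> c")
    case True
    have "q ^ (2 * k + 1) \<le> c ^ (2 * k + 1)" by (rule power_mono) (use True q in auto)
    moreover have "0 < c ^ (2 * k + 1)" using c1 by simp
    ultimately show ?thesis by linarith
  next
    case False
    define t where "t = 1 / c ^ (2 * k + 7)"
    have t0: "0 \<le> t" unfolding t_def using c1 by simp
    have qt: "q \<le> c * (1 + t)"
    proof -
      have ex: "2 * k + 7 = Suc (2 * k + 6)" by simp
      have pc: "c ^ (2 * k + 7) = c * c ^ (2 * k + 6)" unfolding ex by (rule power_Suc)
      have "c * t = e" unfolding t_def e_def pc using c1 by simp
      then show ?thesis using cl False by (auto simp: abs_le_iff algebra_simps)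
    qed
    have nt: "real (2 * k + 1) * t \<le> 1/2"
    proof -
      have "(1998/1000::real) ^ 7 \<le> c ^ 7" by (rule power_mono) (use c in auto)
      then have c7: "100 \<le> c ^ 7" using n7 by linarith
      have "1 + real k * 2 \<le> (1 + 2::real) ^ k" by (rule Bernoulli_inequality) simp
      moreover have "(3::real) ^ k \<le> (c ^ 2) ^ k"
      proof (rule power_mono)
        have "(1998/1000::real) ^ 2 \<le> c ^ 2" by (rule power_mono) (use c in auto)
        then show "3 \<le> c ^ 2" by (simp add: power2_eq_square)
      qed simp
      ultimately have "1 + real k * 2 \<le> c ^ (2 * k)" by (simp add: power_mult)
      then have "100 * (1 + real k * 2) \<le> c ^ 7 * c ^ (2 * k)"
        using c7 c1 by (intro mult_mono) auto
      also have "\<dots> = c ^ (2 * k + 7)" by (simp add: power_add)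
      finally have big: "100 * (1 + real k * 2) \<le> c ^ (2 * k + 7)" .
      have cp: "0 < c ^ (2 * k + 7)" using c1 by simp
      show ?thesis unfolding t_def using big cp by (simp add: field_simps)
    qed
    have "q ^ (2 * k + 1) \<le> (c * (1 + t)) ^ (2 * k + 1)" by (rule power_mono[OF qt]) (use q in simp)
    also have "\<dots> = c ^ (2 * k + 1) * (1 + t) ^ (2 * k + 1)" by (simp add: power_mult_distrib)
    also have "\<dots> \<le> c ^ (2 * k + 1) * 2" by (rule mult_left_mono[OF pow_small[OF t0 nt]]) (use c1 in simp)
    finally show ?thesis by simp
  qed
  define T1 where "T1 = q ^ (2 * k + 1) * (1 - (1 - 1 / q ^ k) / (q - 1))"
  define T2 where "T2 = q ^ (k + 1) * (1 - (1 - 1 / q ^ k) / (q - 1))"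
  have T1H: "T1 = q ^ (2 * k + 1) * (N q / (q - 1))" unfolding T1_def using HN unfolding H_def by simp
  have T2H: "T2 = q ^ (k + 1) * (N q / (q - 1))" unfolding T2_def using HN unfolding H_def by simp
  have aN: "\<bar>N q / (q - 1)\<bar> \<le> 2 * e / (997/1000)"
  proof -
    have "\<bar>N q / (q - 1)\<bar> = \<bar>N q\<bar> / (q - 1)" using q by (simp add: abs_divide)
    also have "\<dots> \<le> 2 * e / (q - 1)" by (rule divide_right_mono[OF Nq]) (use q in simp)
    also have "\<dots> \<le> 2 * e / (997/1000)" by (rule divide_left_mono) (use q2 e0 in auto)
    finally show ?thesis .
  qed
  have c5: "31 \<le> c ^ 5"
  proof -
    have "(1998/1000::real) ^ 5 \<le> c ^ 5" by (rule power_mono) (use c in auto)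
    then show ?thesis using n5 by linarith
  qed
  have qe: "q ^ (2 * k + 1) * e \<le> 2 / 31"
  proof -
    have "q ^ (2 * k + 1) * e \<le> 2 * c ^ (2 * k + 1) * e" by (rule mult_right_mono[OF ratio e0])
    also have "\<dots> = 2 / c ^ 5"
    proof -
      have ex6: "2 * k + 6 = (2 * k + 1) + 5" by simp
      have pc6: "c ^ (2 * k + 6) = c ^ (2 * k + 1) * c ^ 5" unfolding ex6 by (rule power_add)
      have gen: "0 < X \<Longrightarrow> 0 < Y \<Longrightarrow> 2 * X * (1 / (X * Y)) = 2 / Y" for X Y :: real
        by (simp add: field_simps)
      show ?thesis unfolding e_def pc6 by (rule gen) (use c1 in auto)
    qed
    also have "\<dots> \<le> 2 / 31" by (rule divide_left_mono) (use c5 c1 in auto)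
    finally show ?thesis .
  qed
  have aT1: "\<bar>T1\<bar> \<le> 3/8"
  proof -
    have "\<bar>T1\<bar> = q ^ (2 * k + 1) * \<bar>N q / (q - 1)\<bar>" unfolding T1H abs_mult using q by simp
    also have "\<dots> \<le> q ^ (2 * k + 1) * (2 * e / (997/1000))" by (rule mult_left_mono[OF aN]) (use q in simp)
    also have "\<dots> = (q ^ (2 * k + 1) * e) * (2000/997)" by simp
    also have "\<dots> \<le> (2 / 31) * (2000/997)" by (rule mult_right_mono[OF qe]) simp
    also have "\<dots> \<le> 3/8" by simp
    finally show ?thesis .
  qed
  have aT2: "\<bar>T2\<bar> \<le> 3/8"
  proof -
    have "q ^ (k + 1) \<le> q ^ (2 * k + 1)" by (rule power_increasing) (use q in auto)
    then have "\<bar>T2\<bar> \<le> \<bar>T1\<bar>" unfolding T1H T2H abs_mult using q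
      by (intro mult_right_mono) auto
    then show ?thesis using aT1 by simp
  qed
  obtain A B C where ABC: "nice A" "nice B" "nice C" "val q A - val q B = T1" "val q B - val q C = T2"
    using construct[OF q2 q(2) aT1 aT2] by blast
  have k2: "2 \<le> k" using k by simp
  show ?thesis using core[OF q2 q(2) k2 ABC(1-3)] ABC(4,5) unfolding T1_def T2_def by blast
qed

theorem theoremB:
  shows "(\<forall>(k::nat) (q::real). k \<ge> 10 \<longrightarrow> 1 < q \<longrightarrow> q < 2 \<longrightarrow>
            \<bar>q - kbonacci k\<bar> \<le> kbonacci k powi (- (2 * int k + 6)) \<longrightarrow> q \<in> B3)
       \<and> (\<forall>q::real. 1 < q \<longrightarrow> q < 2 \<longrightarrow>
            0 < q - kbonacci 9 \<and> q - kbonacci 9 \<le> kbonacci 9 powi (-24) \<longrightarrow> q \<in> B3)"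
proof (intro conjI allI impI)
  fix k :: nat and q :: real
  assume h: "k \<ge> 10" "1 < q" "q < 2" "\<bar>q - kbonacci k\<bar> \<le> kbonacci k powi (- (2 * int k + 6))"
  have e: "- (2 * int k + 6) = - int (2 * k + 6)" by simp
  have "kbonacci k powi (- (2 * int k + 6)) = inverse (kbonacci k ^ (2 * k + 6))"
    unfolding e by (simp only: power_int_minus power_int_of_nat)
  then have "\<bar>q - kbonacci k\<bar> \<le> 1 / kbonacci k ^ (2 * k + 6)" using h(4) by (simp add: inverse_eq_divide)
  then show "q \<in> B3" using main[of k q] h by simp
next
  fix q :: real
  assume h: "1 < q" "q < 2" "0 < q - kbonacci 9 \<and> q - kbonacci 9 \<le> kbonacci 9 powi (-24)"
  have e: "(-24::int) = - int (2 * 9 + 6)" by simp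
  have "kbonacci 9 powi (-24) = inverse (kbonacci 9 ^ (2 * 9 + 6))"
    unfolding e by (simp only: power_int_minus power_int_of_nat)
  then have "\<bar>q - kbonacci 9\<bar> \<le> 1 / kbonacci 9 ^ (2 * 9 + 6)" using h(3) by (simp add: inverse_eq_divide)
  then show "q \<in> B3" using main[of 9 q] h by simp
qed


end
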